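(* For every integer $d\ge 3$ there exists a finite Borel measure $\mu$ on $\mathbb{R}^d$, vanishing on every affine hyperplane, such that no $d$ mutually orthogonal hyperplanes $H_1,\dots,H_d\subset\mathbb{R}^d$ define an orthogonal equipartition of $\mu$.
   Context: Hyperplanes $H_1,\dots,H_d\subset\mathbb{R}^d$ define an orthogonal equipartition of a finite Borel measure $\mu$ on $\mathbb{R}^d$ if they are mutually orthogonal (their normal vectors are pairwise orthogonal) and each of the $2^d$ open regions into which they divide $\mathbb{R}^d$ (the sets $\bigcap_{i=1}^d H_i^{s_i}$, $s_i\in\{+,-\}$, where $H_i^{+},H_i^{-}$ are the two open half-spaces bounded by $H_i$) has $\mu$-measure $\mu(\mathbb{R}^d)/2^d$. *)

theory Defs
  imports "HOL-Analysis.Analysis"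
begin

definition open_halfspace :: "bool \<Rightarrow> 'a::real_inner \<Rightarrow> real \<Rightarrow> 'a set" where
  "open_halfspace s a b = (if s then {x. a \<bullet> x > b} else {x. a \<bullet> x < b})"

definition orthogonal_equipartition ::
  "(real^'n) measure \<Rightarrow> ('n::finite \<Rightarrow> real^'n) \<Rightarrow> ('n \<Rightarrow> real) \<Rightarrow> bool" where
  "orthogonal_equipartition M a b \<longleftrightarrow>
     (\<forall>i. a i \<noteq> 0) \<and>
     (\<forall>i j. i \<noteq> j \<longrightarrow> a i \<bullet> a j = 0) \<and>
     (\<forall>s :: 'n \<Rightarrow> bool.
        emeasure M (\<Inter>i. open_halfspace (s i) (a i) (b i)) = emeasure M UNIV / 2 ^ CARD('n))"

end

theory Submission
  imports Defs "HOL-Computational_Algebra.Polynomial" "HOL-Library.Cardinality"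
begin


lemma poly_rolle_set:
  fixes p :: "real poly"
  assumes "finite S" "card S = Suc n" "\<And>x. x \<in> S \<Longrightarrow> poly p x = 0"
  shows "\<exists>T. finite T \<and> card T = n \<and> (\<forall>x\<in>T. poly (pderiv p) x = 0 \<and> Min S < x \<and> x < Max S)"
  using assms
proof (induction n arbitrary: S)
  case 0
  then show ?case by (intro exI[of _ "{}"]) auto
next
  case (Suc n)
  define M where "M = Max S"
  define S' where "S' = S - {M}"
  have ne: "S \<noteq> {}" using Suc.prems by auto
  have MS: "M \<in> S" using Suc.prems ne by (simp add: M_def)
  have cS': "card S' = Suc n" using Suc.prems MS by (simp add: S'_def)
  have fS': "finite S'" using Suc.prems by (simp add: S'_def)
  have neS': "S' \<noteq> {}" using cS' by auto
  obtain T' where T': "finite T'" "card T' = n"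
     "\<forall>x\<in>T'. poly (pderiv p) x = 0 \<and> Min S' < x \<and> x < Max S'"
    using Suc.IH[OF fS' cS'] Suc.prems(3) by (auto simp: S'_def)
  define M' where "M' = Max S'"
  have M'S': "M' \<in> S'" using fS' neS' by (simp add: M'_def)
  have M'lt: "M' < M"
  proof -
    have "M' \<le> M" using M'S' Suc.prems(1) by (auto simp: M_def S'_def)
    moreover have "M' \<noteq> M" using M'S' by (auto simp: S'_def)
    ultimately show ?thesis by simp
  qed
  have "\<exists>z. M' < z \<and> z < M \<and> DERIV (poly p) z :> 0"
  proof (rule Rolle[OF M'lt])
    show "poly p M' = poly p M" using M'S' MS Suc.prems(3) by (auto simp: S'_def)
    show "continuous_on {M'..M} (poly p)" by (intro continuous_on_poly continuous_on_id)
    show "\<And>x. M' < x \<Longrightarrow> x < M \<Longrightarrow> poly p differentiable (at x)"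
      using poly_DERIV real_differentiable_def by blast
  qed
  then obtain z where z: "M' < z" "z < M" "DERIV (poly p) z :> 0" by blast
  have pz: "poly (pderiv p) z = 0" using z(3) poly_DERIV DERIV_unique by blast
  have zT': "z \<notin> T'" using T'(3) z(1) by (auto simp: M'_def)
  have MinS: "Min S \<le> Min S'" using Suc.prems(1) neS' by (auto simp: S'_def)
  have MinM': "Min S \<le> M'" using Suc.prems(1) M'S' by (auto simp: S'_def)
  have MaxS': "Max S' \<le> Max S" using Suc.prems(1) neS' by (auto simp: S'_def)
  show ?case
    apply (intro exI[of _ "insert z T'"])
    using T' zT' pz z MinS MinM' MaxS' M'lt by (auto simp: M_def M'_def)
qed

lemma poly_rolle_iter:
  fixes p :: "real poly"
  assumes "finite S" "card S \<ge> Suc m" "S \<subseteq> {a<..<b}" "\<And>x. x \<in> S \<Longrightarrow> poly p x = 0"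
  shows "\<exists>t. a < t \<and> t < b \<and> poly ((pderiv ^^ m) p) t = 0"
  using assms
proof (induction m arbitrary: p S)
  case 0
  then obtain x where "x \<in> S" by fastforce
  then show ?case using 0 by (intro exI[of _ x]) auto
next
  case (Suc m)
  obtain S' where S': "S' \<subseteq> S" "card S' = Suc (Suc m)" "finite S'"
    using obtain_subset_with_card_n[OF Suc.prems(2)] by metis
  obtain T where T: "finite T" "card T = Suc m" "\<forall>x\<in>T. poly (pderiv p) x = 0 \<and> Min S' < x \<and> x < Max S'"
    using poly_rolle_set[OF S'(3) S'(2)] S'(1) Suc.prems(4) by blast
  have ne: "S' \<noteq> {}" using S' by auto
  have "Min S' \<in> S'" "Max S' \<in> S'" using S'(3) ne by auto
  hence "a < Min S'" "Max S' < b" using S'(1) Suc.prems(3) by auto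
  hence "T \<subseteq> {a<..<b}" using T(3) by force
  from Suc.IH[OF T(1) _ this] T obtain t where "a < t" "t < b" "poly ((pderiv ^^ m) (pderiv p)) t = 0"
    by auto
  then show ?case by (auto simp: funpow_Suc_right simp del: funpow.simps)
qed

lemma coeff_higher_pderiv:
  fixes p :: "real poly"
  shows "coeff ((pderiv ^^ m) p) j = pochhammer (real (Suc j)) m * coeff p (j + m)"
proof (induction m arbitrary: j)
  case 0 then show ?case by simp
next
  case (Suc m)
  have "coeff ((pderiv ^^ Suc m) p) j = real (Suc j) * coeff ((pderiv ^^ m) p) (Suc j)"
    by (simp add: coeff_pderiv)
  also have "\<dots> = real (Suc j) * (pochhammer (real (Suc (Suc j))) m * coeff p (Suc j + m))"
    by (simp add: Suc.IH)
  also have "\<dots> = pochhammer (real (Suc j)) (Suc m) * coeff p (j + Suc m)"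
    by (simp add: pochhammer_rec)
  finally show ?case .
qed

lemma poly_sum_bound:
  fixes q :: "real poly"
  assumes "\<forall>k>d. coeff q k = 0"
  shows "poly q t = (\<Sum>j\<le>d. coeff q j * t ^ j)"
proof -
  have dg: "degree q \<le> d" using assms degree_le by blast
  have "poly q t = (\<Sum>j\<le>degree q. coeff q j * t ^ j)" by (rule poly_altdef)
  also have "\<dots> = (\<Sum>j\<le>d. coeff q j * t ^ j)"
    apply (rule sum.mono_neutral_left) using dg by (auto simp: coeff_eq_0)
  finally show ?thesis .
qed

lemma small_coeff:
  fixes p :: "real poly"
  assumes hd: "\<forall>k>d. coeff p k = 0" and h1: "\<forall>k. 1 \<le> k \<longrightarrow> \<bar>coeff p k\<bar> \<le> 1"
    and m: "1 \<le> m" and t: "0 < t" "t \<le> 1" and r: "poly ((pderiv ^^ m) p) t = 0"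
  shows "\<bar>coeff p m\<bar> \<le> t * (\<Sum>j\<in>{1..d}. pochhammer (real (Suc j)) m)"
proof -
  define q where "q = (pderiv ^^ m) p"
  have cq: "coeff q j = pochhammer (real (Suc j)) m * coeff p (j + m)" for j
    by (simp add: q_def coeff_higher_pderiv)
  have hq: "\<forall>k>d. coeff q k = 0" using hd by (auto simp: cq)
  have "0 = (\<Sum>j\<le>d. coeff q j * t ^ j)" using r poly_sum_bound[OF hq, of t] by (simp add: q_def)
  also have "\<dots> = coeff q 0 + (\<Sum>j\<in>{1..d}. coeff q j * t ^ j)"
  proof -
    have "{..d} = insert 0 {1..d}" by auto
    then show ?thesis by simp
  qed
  finally have eq: "coeff q 0 = - (\<Sum>j\<in>{1..d}. coeff q j * t ^ j)" by linarith
  have c0: "coeff q 0 = fact m * coeff p m" by (simp add: cq pochhammer_fact)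
  have "\<bar>coeff q 0\<bar> \<le> (\<Sum>j\<in>{1..d}. \<bar>coeff q j * t ^ j\<bar>)"
    unfolding eq abs_minus_cancel by (rule sum_abs)
  also have "\<dots> \<le> (\<Sum>j\<in>{1..d}. pochhammer (real (Suc j)) m * t)"
  proof (rule sum_mono)
    fix j assume j: "j \<in> {1..d}"
    have pp: "0 \<le> pochhammer (real (Suc j)) m" by (rule pochhammer_nonneg) simp
    have a1: "\<bar>coeff p (j + m)\<bar> \<le> 1" using h1 m by auto
    have tj: "t ^ j \<le> t" using j t by (simp add: power_le_one_iff power_decreasing[of 1 j t, simplified])
    have "\<bar>coeff q j * t ^ j\<bar> = pochhammer (real (Suc j)) m * \<bar>coeff p (j + m)\<bar> * t ^ j"
      using pp t by (simp add: cq abs_mult)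
    also have "\<dots> \<le> pochhammer (real (Suc j)) m * 1 * t"
      using pp a1 tj t by (intro mult_mono) auto
    finally show "\<bar>coeff q j * t ^ j\<bar> \<le> pochhammer (real (Suc j)) m * t" by simp
  qed
  also have "\<dots> = t * (\<Sum>j\<in>{1..d}. pochhammer (real (Suc j)) m)"
    by (simp add: sum_distrib_left mult.commute)
  finally have "fact m * \<bar>coeff p m\<bar> \<le> t * (\<Sum>j\<in>{1..d}. pochhammer (real (Suc j)) m)"
    by (simp add: c0 abs_mult)
  moreover have "\<bar>coeff p m\<bar> \<le> fact m * \<bar>coeff p m\<bar>"
    using fact_ge_1[of m, where 'a=real] by (simp add: mult_le_cancel_right1)
  ultimately show ?thesis by linarith
qed



definition gam :: "('n::finite \<Rightarrow> nat) \<Rightarrow> real \<Rightarrow> real^'n" where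
  "gam idx t = (\<chi> j. t ^ Suc (idx j))"

definition Pa :: "('n::finite \<Rightarrow> nat) \<Rightarrow> real^'n \<Rightarrow> real poly" where
  "Pa idx a = (\<Sum>j\<in>UNIV. monom (a$j) (Suc (idx j)))"

lemma poly_Pa: "poly (Pa idx a) t = a \<bullet> gam idx t"
  by (simp add: Pa_def gam_def inner_vec_def poly_sum poly_monom)

lemma coeff_Pa: "coeff (Pa idx a) k = (\<Sum>j\<in>UNIV. if Suc (idx j) = k then a$j else 0)"
  by (simp add: Pa_def coeff_sum coeff_monom)

lemma coeff_Pa_idx: assumes "inj idx" shows "coeff (Pa idx a) (Suc (idx j)) = a $ j"
proof -
  have "coeff (Pa idx a) (Suc (idx j)) = (\<Sum>j'\<in>UNIV. if j' = j then a$j' else 0)"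
    unfolding coeff_Pa using assms by (intro sum.cong) (auto dest: injD)
  then show ?thesis by simp
qed

lemma coeff_Pa_big: assumes "\<And>j. idx j < d" "d < k" shows "coeff (Pa idx a) k = 0"
  unfolding coeff_Pa
proof (intro sum.neutral ballI)
  fix j
  have "Suc (idx j) \<noteq> k" using assms(1)[of j] assms(2) by linarith
  then show "(if Suc (idx j) = k then a $ j else 0) = 0" by simp
qed

lemma coeff_Pa_bound: assumes "inj idx" shows "\<bar>coeff (Pa idx a) k\<bar> \<le> norm a"
proof (cases "\<exists>j. Suc (idx j) = k")
  case True
  then obtain j where "k = Suc (idx j)" by auto
  then show ?thesis using coeff_Pa_idx[OF assms] component_le_norm_cart by metis
next
  case False
  then have "coeff (Pa idx a) k = 0" unfolding coeff_Pa by (intro sum.neutral) auto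
  then show ?thesis by simp
qed

lemma col_sum:
  fixes u :: "'n::finite \<Rightarrow> real^'n"
  assumes n1: "\<And>i. norm (u i) = 1" and orth: "\<And>i k. i \<noteq> k \<Longrightarrow> u i \<bullet> u k = 0"
  shows "(\<Sum>i\<in>UNIV. (u i $ j)^2) = 1"
proof -
  define U :: "real^'n^'n" where "U = (\<chi> i. u i)"
  have ii: "u i \<bullet> u i = 1" for i using n1[of i] by (simp add: power2_norm_eq_inner[symmetric])
  have "U ** transpose U = mat 1"
  proof (rule vec_eq_iff[THEN iffD2], intro allI, rule vec_eq_iff[THEN iffD2], intro allI)
    fix i k
    have "(U ** transpose U) $ i $ k = u i \<bullet> u k"
      by (simp add: matrix_matrix_mult_def U_def transpose_def inner_vec_def)
    then show "(U ** transpose U) $ i $ k = mat 1 $ i $ k"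
      using orth[of i k] ii[of i] by (auto simp: mat_def)
  qed
  then have "transpose U ** U = mat 1" using matrix_left_right_inverse by blast
  then have "(transpose U ** U) $ j $ j = 1" by (simp add: mat_def)
  then show ?thesis
    by (simp add: matrix_matrix_mult_def U_def transpose_def power2_eq_square)
qed

lemma count_rows:
  fixes u :: "'n::finite \<Rightarrow> real^'n"
  assumes n1: "\<And>i. norm (u i) = 1" and orth: "\<And>i k. i \<noteq> k \<Longrightarrow> u i \<bullet> u k = 0"
    and bij: "bij_betw idx (UNIV::'n set) {..<CARD('n)}"
    and m: "1 \<le> m" "m \<le> CARD('n)"
    and small: "\<And>i j. i \<in> R \<Longrightarrow> idx j < m \<Longrightarrow> \<bar>u i $ j\<bar> \<le> \<delta>"
    and dl: "0 \<le> \<delta>" "real (CARD('n)) * \<delta> < 1"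
  shows "card R \<le> CARD('n) - m"
proof (rule ccontr)
  assume "\<not> card R \<le> CARD('n) - m"
  then have cR: "card R > CARD('n) - m" by simp
  define J where "J = {j. idx j < m}"
  have "idx ` J = {..<m}" using bij m unfolding J_def bij_betw_def by auto
  moreover have "inj_on idx J" using bij unfolding bij_betw_def by (auto intro: inj_on_subset)
  ultimately have cJ: "card J = m" using card_image by fastforce
  have sq1: "(\<Sum>j\<in>UNIV. (u i $ j)^2) = 1" for i
  proof -
    have "(norm (u i))^2 = u i \<bullet> u i" by (rule power2_norm_eq_inner)
    then show ?thesis using n1[of i] by (simp add: inner_vec_def power2_eq_square)
  qed
  have "real m = (\<Sum>j\<in>J. \<Sum>i\<in>UNIV. (u i $ j)^2)" using col_sum[OF n1 orth] cJ by simp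
  also have "\<dots> = (\<Sum>i\<in>UNIV. \<Sum>j\<in>J. (u i $ j)^2)" by (rule sum.swap)
  also have "\<dots> = (\<Sum>i\<in>R. \<Sum>j\<in>J. (u i $ j)^2) + (\<Sum>i\<in>-R. \<Sum>j\<in>J. (u i $ j)^2)"
  proof -
    have "(UNIV::'n set) = R \<union> -R" by auto
    then show ?thesis by (metis Compl_disjoint finite sum.union_disjoint)
  qed
  also have "\<dots> \<le> (\<Sum>i\<in>R. real m * \<delta>^2) + (\<Sum>i\<in>-R. 1)"
  proof (intro add_mono sum_mono)
    fix i assume "i \<in> R"
    have "(\<Sum>j\<in>J. (u i $ j)^2) \<le> (\<Sum>j\<in>J. \<delta>^2)"
    proof (rule sum_mono)
      fix j assume "j \<in> J"
      then have "\<bar>u i $ j\<bar> \<le> \<delta>" using small[OF \<open>i\<in>R\<close>] by (simp add: J_def)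
      then have "\<bar>u i $ j\<bar>^2 \<le> \<delta>^2" by (rule power_mono) simp
      then show "(u i $ j)^2 \<le> \<delta>^2" by simp
    qed
    then show "(\<Sum>j\<in>J. (u i $ j)^2) \<le> real m * \<delta>^2" using cJ by simp
  next
    fix i
    have "(\<Sum>j\<in>J. (u i $ j)^2) \<le> (\<Sum>j\<in>UNIV. (u i $ j)^2)"
      by (rule sum_mono2) auto
    then show "(\<Sum>j\<in>J. (u i $ j)^2) \<le> 1" using sq1 by simp
  qed
  also have "\<dots> = real (card R) * (real m * \<delta>^2) + real (card (-R))" by simp
  finally have ineq: "real m \<le> real (card R) * (real m * \<delta>^2) + real (card (-R))" .
  have cc: "card (-R) = CARD('n) - card R" 
    by (simp add: Compl_eq_Diff_UNIV card_Diff_subset)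
  have "card R \<le> CARD('n)" by (simp add: card_mono)
  then have c2: "real (card (-R)) \<le> real m - 1" using cR m cc by linarith
  have "real (card R) * (real m * \<delta>^2) \<le> real CARD('n) * (real CARD('n) * \<delta>^2)"
    using \<open>card R \<le> CARD('n)\<close> m dl by (intro mult_mono) auto
  also have "\<dots> = (real CARD('n) * \<delta>)^2" by (simp add: power2_eq_square)
  also have "\<dots> < 1"
  proof -
    have "0 \<le> real CARD('n) * \<delta>" using dl by simp
    then show ?thesis using dl(2) by (simp add: power_less_one_iff)
  qed
  finally show False using ineq c2 by linarith
qed



lemma same_sign:
  fixes f :: "real \<Rightarrow> real"
  assumes cont: "continuous_on UNIV f" and tt: "t \<le> t'"
    and nz: "\<And>x. t \<le> x \<Longrightarrow> x \<le> t' \<Longrightarrow> f x \<noteq> 0"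
  shows "(f t > 0) = (f t' > 0)"
proof (rule ccontr)
  assume ne: "(f t > 0) \<noteq> (f t' > 0)"
  have c: "continuous_on {t..t'} f" using cont continuous_on_subset by blast
  have ft: "f t \<noteq> 0" "f t' \<noteq> 0" using nz tt by auto
  show False
  proof (cases "f t > 0")
    case True
    then have "f t' \<le> 0" "0 \<le> f t" using ne by auto
    from IVT2'[of f t' 0 t, OF this tt c] nz show False by auto
  next
    case False
    then have "f t \<le> 0" "0 \<le> f t'" using ne by auto
    from IVT'[of f t 0 t', OF this tt c] nz show False by auto
  qed
qed



lemma arcs_count:
  fixes f :: "'i::finite \<Rightarrow> real \<Rightarrow> real"
  assumes cont: "\<And>i. continuous_on UNIV (f i)"
    and Z: "finite Z" and Zc: "\<And>i t. lo < t \<Longrightarrow> t < hi \<Longrightarrow> f i t = 0 \<Longrightarrow> t \<in> Z"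
  shows "card ((\<lambda>t. (\<lambda>i. f i t > 0)) ` ({lo<..<hi} - Z)) \<le> card Z + 1"
proof -
  define A where "A = {lo<..<hi} - Z"
  define sv where "sv = (\<lambda>t. (\<lambda>i. f i t > 0))"
  define cnt where "cnt = (\<lambda>t. card {z\<in>Z. z < t})"
  have key0: "sv t = sv t'" if "t \<in> A" "t' \<in> A" "cnt t = cnt t'" "t \<le> t'" for t t'
  proof -
    have noz: "z \<notin> Z" if "t \<le> z" "z \<le> t'" for z
    proof
      assume zZ: "z \<in> Z"
      have "t \<noteq> z" "t' \<noteq> z" using zZ \<open>t \<in> A\<close> \<open>t' \<in> A\<close> unfolding A_def by auto
      then have "t < z" "z < t'" using that by auto
      have "{z\<in>Z. z < t} \<subseteq> {z\<in>Z. z < t'}" using \<open>t \<le> t'\<close> by auto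
      moreover have "z \<in> {z\<in>Z. z < t'}" "z \<notin> {z\<in>Z. z < t}" using \<open>t < z\<close> \<open>z < t'\<close> zZ by auto
      ultimately have "{z\<in>Z. z < t} \<subset> {z\<in>Z. z < t'}" by blast
      then have "cnt t < cnt t'" unfolding cnt_def by (rule psubset_card_mono[rotated]) (simp add: Z)
      then show False using \<open>cnt t = cnt t'\<close> by simp
    qed
    show ?thesis unfolding sv_def
    proof (rule ext)
      fix i
      show "(f i t > 0) = (f i t' > 0)"
      proof (rule same_sign[OF cont \<open>t \<le> t'\<close>])
        fix x assume "t \<le> x" "x \<le> t'"
        moreover have "lo < x" "x < hi" using \<open>t \<le> x\<close> \<open>x \<le> t'\<close> that(1,2) by (auto simp: A_def)
        ultimately show "f i x \<noteq> 0" using Zc noz by blast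
      qed
    qed
  qed
  have key: "sv t = sv t'" if "t \<in> A" "t' \<in> A" "cnt t = cnt t'" for t t'
  proof (cases "t \<le> t'")
    case True then show ?thesis using key0 that by blast
  next
    case False then have "t' \<le> t" by simp
    then show ?thesis using key0[of t' t] that by simp
  qed
  define g where "g = (\<lambda>s. cnt (SOME t. t \<in> A \<and> sv t = s))"
  have rep: "(SOME t. t \<in> A \<and> sv t = s) \<in> A \<and> sv (SOME t. t \<in> A \<and> sv t = s) = s" if "s \<in> sv ` A" for s
  proof -
    from that obtain t where "t \<in> A" "sv t = s" by blast
    then have "t \<in> A \<and> sv t = s" by blast
    then show ?thesis by (rule someI)
  qed
  have "inj_on g (sv ` A)"
  proof (rule inj_onI)
    fix s1 s2 assume "s1 \<in> sv ` A" "s2 \<in> sv ` A" "g s1 = g s2"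
    then show "s1 = s2" using rep[of s1] rep[of s2] key unfolding g_def by metis
  qed
  moreover have "g ` (sv ` A) \<subseteq> {..card Z}"
  proof (rule image_subsetI)
    fix s
    have "cnt x \<le> card Z" for x unfolding cnt_def by (rule card_mono[OF Z]) auto
    then show "g s \<in> {..card Z}" unfolding g_def by simp
  qed
  ultimately have "card (sv ` A) \<le> card {..card Z}" by (rule card_inj_on_le) simp
  then show ?thesis by (simp add: A_def sv_def)
qed



lemma tri_sum: "(\<Sum>m<d. d - m) * 2 = d * (d + 1)" for d :: nat
proof -
  have "(\<Sum>m<d. d - m) = (\<Sum>m<d. Suc m)"
  proof -
    have "(\<Sum>m<d. d - m) = (\<Sum>m<d. Suc (d - Suc m))"
      by (intro sum.cong) auto
    also have "\<dots> = (\<Sum>m<d. Suc m)"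
      using sum.nat_diff_reindex[of Suc d] by simp
    finally show ?thesis .
  qed
  moreover have "(\<Sum>m<d. Suc m) * 2 = d * (d + 1)" by (induction d) auto
  ultimately show ?thesis by simp
qed

lemma pow_big: "3 \<le> d \<Longrightarrow> d * (d + 1) + 2 < 2 * (2::nat) ^ d" for d :: nat
proof (induction d rule: dec_induct)
  case base then show ?case by simp
next
  case (step n)
  have a: "n \<le> n * n" by simp
  have b: "n * (n + 1) = n * n + n" by (simp add: ring_distribs)
  have "Suc n * (Suc n + 1) + 2 = (n*(n+1) + 2) + (2*n + 2)" by (simp add: algebra_simps)
  also have "\<dots> \<le> (n*(n+1) + 2) + (n*(n+1) + 2)" using a b by simp
  also have "\<dots> < 2 * 2 ^ n + 2 * 2 ^ n" using step.IH by simp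
  also have "\<dots> = 2 * 2 ^ Suc n" by simp
  finally show ?case .
qed

lemma arith_final: "3 \<le> d \<Longrightarrow> (\<Sum>m<d. d - m) + 1 < (2::nat) ^ d"
  using tri_sum[of d] pow_big[of d] by linarith

lemma layer_sum:
  fixes c :: "'i::finite \<Rightarrow> nat"
  assumes "\<And>i. c i \<le> d"
  shows "(\<Sum>i\<in>UNIV. c i) = (\<Sum>m<d. card {i. m < c i})"
proof -
  have "c i = (\<Sum>m<d. if m < c i then 1 else 0)" for i
  proof -
    have "(\<Sum>m<d. if m < c i then 1 else 0) = card ({..<d} \<inter> {m. m < c i})"
      by (simp add: sum.If_cases)
    also have "{..<d} \<inter> {m. m < c i} = {..<c i}" using assms[of i] by auto
    finally show ?thesis by simp
  qed
  then have "(\<Sum>i\<in>UNIV. c i) = (\<Sum>i\<in>UNIV. \<Sum>m<d. if m < c i then 1 else 0)"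
    by (intro sum.cong) auto
  also have "\<dots> = (\<Sum>m<d. \<Sum>i\<in>UNIV. if m < c i then 1 else 0)" by (rule sum.swap)
  also have "\<dots> = (\<Sum>m<d. card {i. m < c i})"
    by (intro sum.cong) (auto simp: sum.If_cases)
  finally show ?thesis .
qed



lemma key_bound:
  fixes a :: "'n::finite \<Rightarrow> real^'n" and b :: "'n \<Rightarrow> real"
  assumes bij: "bij_betw idx (UNIV::'n set) {..<CARD('n)}"
    and nz: "\<And>i. a i \<noteq> 0" and orth: "\<And>i j. i \<noteq> j \<Longrightarrow> a i \<bullet> a j = 0"
    and eps: "0 < \<epsilon>" "\<epsilon> \<le> 1"
    and epsK: "\<And>m. 1 \<le> m \<Longrightarrow> m \<le> CARD('n) \<Longrightarrow> \<epsilon> * (\<Sum>j\<in>{1..CARD('n)}. pochhammer (real (Suc j)) m) \<le> \<delta>"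
    and dl: "0 \<le> \<delta>" "real CARD('n) * \<delta> < 1"
  defines "Z \<equiv> \<lambda>i. {t. 0 < t \<and> t < \<epsilon> \<and> a i \<bullet> gam idx t = b i}"
  shows "finite (Z i)" "(\<Sum>i\<in>UNIV. card (Z i)) \<le> (\<Sum>m<CARD('n). CARD('n) - m)"
proof -
  define d where "d = CARD('n)"
  have inj: "inj idx" using bij by (simp add: bij_betw_def)
  have idxd: "idx j < d" for j using bij by (auto simp: bij_betw_def d_def)
  define p where "p = (\<lambda>i. smult (inverse (norm (a i))) (Pa idx (a i) - [:b i:]))"
  define u where "u = (\<lambda>i. inverse (norm (a i)) *\<^sub>R a i)"
  have nzn: "norm (a i) \<noteq> 0" for i using nz by simp
  have polyp: "poly (p i) t = 0 \<longleftrightarrow> a i \<bullet> gam idx t = b i" for i t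
    using nzn[of i] by (simp add: p_def poly_Pa)
  have Zp: "Z i = {t. 0 < t \<and> t < \<epsilon> \<and> poly (p i) t = 0}" for i
    by (simp add: Z_def polyp)
  have coeffS: "coeff (p i) (Suc k) = inverse (norm (a i)) * coeff (Pa idx (a i)) (Suc k)" for i k
    by (simp add: p_def)
  have cu: "coeff (p i) (Suc (idx j)) = u i $ j" for i j
    by (simp add: coeffS coeff_Pa_idx[OF inj] u_def)
  have pnz: "p i \<noteq> 0" for i
  proof
    assume "p i = 0"
    then have "u i $ j = 0" for j using cu[of i j] by simp
    then have "u i = 0" by (simp add: vec_eq_iff)
    then show False using nz[of i] nzn[of i] by (simp add: u_def)
  qed
  have finZ: "finite (Z i)" for i
    unfolding Zp using poly_roots_finite[OF pnz[of i]] by (rule rev_finite_subset) auto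
  then show "finite (Z i)" .
  have nu: "norm (u i) = 1" for i using nzn[of i] by (simp add: u_def)
  have ou: "u i \<bullet> u j = 0" if "i \<noteq> j" for i j using orth[OF that] by (simp add: u_def)
  have hd: "\<forall>k>d. coeff (p i) k = 0" for i
  proof (intro allI impI)
    fix k assume "d < k"
    then obtain k' where "k = Suc k'" by (cases k) auto
    then show "coeff (p i) k = 0" using coeff_Pa_big[of idx d, OF idxd \<open>d < k\<close>] by (simp add: coeffS)
  qed
  have h1: "\<forall>k. 1 \<le> k \<longrightarrow> \<bar>coeff (p i) k\<bar> \<le> 1" for i
  proof (intro allI impI)
    fix k :: nat assume "1 \<le> k"
    then obtain k' where k: "k = Suc k'" by (cases k) auto
    have "\<bar>coeff (p i) k\<bar> = inverse (norm (a i)) * \<bar>coeff (Pa idx (a i)) (Suc k')\<bar>"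
      by (simp add: k coeffS abs_mult)
    also have "\<dots> \<le> inverse (norm (a i)) * norm (a i)"
      by (intro mult_left_mono coeff_Pa_bound[OF inj]) simp
    also have "\<dots> = 1" using nzn[of i] by simp
    finally show "\<bar>coeff (p i) k\<bar> \<le> 1" .
  qed
  define R where "R = (\<lambda>m. {i. m < card (Z i)})"
  have smallR: "\<bar>u i $ j\<bar> \<le> \<delta>" if "1 \<le> m" "m \<le> d" "i \<in> R m" "idx j < m" for m i j
  proof -
    define m' where "m' = Suc (idx j)"
    have "card (Z i) \<ge> Suc m'" using that by (simp add: R_def m'_def)
    moreover have "Z i \<subseteq> {0<..<\<epsilon>}" by (auto simp: Z_def)
    ultimately obtain t where t: "0 < t" "t < \<epsilon>" "poly ((pderiv ^^ m') (p i)) t = 0"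
      using poly_rolle_iter[OF finZ[of i]] Zp[of i] by blast
    have "\<bar>coeff (p i) m'\<bar> \<le> t * (\<Sum>j\<in>{1..d}. pochhammer (real (Suc j)) m')"
      by (rule small_coeff[OF hd h1]) (use t eps in \<open>auto simp: m'_def\<close>)
    also have "\<dots> \<le> \<epsilon> * (\<Sum>j\<in>{1..d}. pochhammer (real (Suc j)) m')"
      using t by (intro mult_right_mono sum_nonneg pochhammer_nonneg) auto
    also have "\<dots> \<le> \<delta>" using epsK[of m'] that by (simp add: m'_def d_def)
    finally show ?thesis by (simp add: cu m'_def)
  qed
  have cR: "card (R m) \<le> d - m" if "m \<le> d" for m
  proof (cases "m = 0")
    case True then show ?thesis by (simp add: d_def card_mono)
  next
    case False
    show ?thesis unfolding d_def
      by (rule count_rows[OF nu ou bij _ _ _ dl]) (use False that smallR in \<open>auto simp: d_def\<close>)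
  qed
  have cZd: "card (Z i) \<le> d" for i
  proof -
    have "card (R d) = 0" using cR[of d] by simp
    then have "R d = {}" by (simp add: R_def)
    then show ?thesis by (auto simp: R_def not_less)
  qed
  have "(\<Sum>i\<in>UNIV. card (Z i)) = (\<Sum>m<d. card (R m))"
    unfolding R_def by (rule layer_sum) (rule cZd)
  also have "\<dots> \<le> (\<Sum>m<d. d - m)" by (intro sum_mono cR) simp
  finally show "(\<Sum>i\<in>UNIV. card (Z i)) \<le> (\<Sum>m<CARD('n). CARD('n) - m)" by (simp add: d_def)
qed



theorem theorem1:
  assumes "CARD('n::finite) \<ge> 3"
  shows "\<exists>M :: (real^'n) measure.
           sets M = sets borel \<and> finite_measure M \<and>
           (\<forall>a c. a \<noteq> 0 \<longrightarrow> emeasure M {x. a \<bullet> x = c} = 0) \<and>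
           (\<forall>a b. \<not> orthogonal_equipartition M a b)"
proof -
  define d where "d = CARD('n)"
  have d3: "3 \<le> d" using assms by (simp add: d_def)
  obtain idx :: "'n \<Rightarrow> nat" where bij: "bij_betw idx (UNIV::'n set) {..<CARD('n)}"
    using ex_bij_betw_finite_nat[of "UNIV::'n set"] by (auto simp: atLeast0LessThan)
  have inj: "inj idx" using bij by (simp add: bij_betw_def)
  define K where "K = (\<Sum>m\<le>d. \<Sum>j\<in>{1..d}. pochhammer (real (Suc j)) m)"
  have Kterm: "(\<Sum>j\<in>{1..d}. pochhammer (real (Suc j)) m) \<le> K" if "m \<le> d" for m
    unfolding K_def
  proof (rule member_le_sum)
    show "m \<in> {..d}" using that by simp
    show "\<And>x. x \<in> {..d} - {m} \<Longrightarrow> 0 \<le> (\<Sum>j\<in>{1..d}. pochhammer (real (Suc j)) x)"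
      by (intro sum_nonneg pochhammer_nonneg) auto
  qed simp
  have "(\<Sum>j\<in>{1..d}. pochhammer (real (Suc j)) 0) = real d" by simp
  then have Kd: "real d \<le> K" using Kterm[of 0] by simp
  have Kpos: "1 \<le> K" using Kd d3 by simp
  define \<epsilon> where "\<epsilon> = 1 / (K * (real d + 1))"
  define \<delta> where "\<delta> = 1 / (real d + 1)"
  have eps0: "0 < \<epsilon>" using Kpos by (simp add: \<epsilon>_def)
  have eps1: "\<epsilon> \<le> 1"
  proof -
    have "0 \<le> K * real d" using Kpos by (intro mult_nonneg_nonneg) auto
    moreover have "K * (real d + 1) = K * real d + K" by (simp add: algebra_simps)
    ultimately have "1 \<le> K * (real d + 1)" using Kpos by linarith
    then show ?thesis by (simp add: \<epsilon>_def)
  qed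
  have epsK: "\<epsilon> * (\<Sum>j\<in>{1..CARD('n)}. pochhammer (real (Suc j)) m) \<le> \<delta>"
    if "1 \<le> m" "m \<le> CARD('n)" for m
  proof -
    have "\<epsilon> * (\<Sum>j\<in>{1..CARD('n)}. pochhammer (real (Suc j)) m) \<le> \<epsilon> * K"
    proof (rule mult_left_mono)
      show "(\<Sum>j\<in>{1..CARD('n)}. pochhammer (real (Suc j)) m) \<le> K"
        using Kterm[of m] that unfolding d_def by blast
      show "0 \<le> \<epsilon>" using eps0 by simp
    qed
    also have "\<dots> = \<delta>" using Kpos by (simp add: \<epsilon>_def \<delta>_def)
    finally show ?thesis .
  qed
  have dl: "0 \<le> \<delta>" "real CARD('n) * \<delta> < 1" by (auto simp: \<delta>_def d_def[symmetric] field_simps)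
  define \<gamma> where "\<gamma> = gam idx"
  define M where "M = distr (restrict_space lborel {0<..<\<epsilon>}) borel \<gamma>"
  have contg: "continuous_on UNIV \<gamma>" unfolding \<gamma>_def gam_def by (intro continuous_intros)
  have meas: "\<gamma> \<in> measurable (restrict_space lborel {0<..<\<epsilon>}) borel"
    by (rule measurable_restrict_space1) (simp add: borel_measurable_continuous_onI[OF contg])
  have emM: "emeasure M A = emeasure lborel {t\<in>{0<..<\<epsilon>}. \<gamma> t \<in> A}" if "A \<in> sets borel" for A
  proof -
    have "emeasure M A = emeasure (restrict_space lborel {0<..<\<epsilon>}) (\<gamma> -` A \<inter> space (restrict_space lborel {0<..<\<epsilon>}))"
      unfolding M_def by (rule emeasure_distr[OF meas that])
    also have "\<gamma> -` A \<inter> space (restrict_space lborel {0<..<\<epsilon>}) = {t\<in>{0<..<\<epsilon>}. \<gamma> t \<in> A}"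
      by (auto simp: space_restrict_space)
    also have "emeasure (restrict_space lborel {0<..<\<epsilon>}) {t\<in>{0<..<\<epsilon>}. \<gamma> t \<in> A} = emeasure lborel {t\<in>{0<..<\<epsilon>}. \<gamma> t \<in> A}"
      by (rule emeasure_restrict_space) auto
    finally show ?thesis .
  qed
  have setsM: "sets M = sets borel" by (simp add: M_def)
  have spM: "space M = UNIV" by (simp add: M_def)
  have totM: "emeasure M UNIV = ennreal \<epsilon>"
  proof -
    have "{t\<in>{0<..<\<epsilon>}. \<gamma> t \<in> UNIV} = {0<..<\<epsilon>}" by auto
    then show ?thesis using emM[of UNIV] eps0 by (simp del: greaterThanLessThan_iff)
  qed
  have finM: "finite_measure M"
    by (rule finite_measureI) (simp add: spM totM)
  have hyp: "emeasure M {x. a \<bullet> x = c} = 0" if "a \<noteq> 0" for a c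
  proof -
    have "\<exists>j. a $ j \<noteq> 0" using that by (metis vec_eq_iff zero_index)
    then obtain j where j: "a $ j \<noteq> 0" by blast
    have "coeff (Pa idx a - [:c:]) (Suc (idx j)) = a $ j" by (simp add: coeff_Pa_idx[OF inj])
    then have pnz: "Pa idx a - [:c:] \<noteq> 0" using j by auto
    have "{t\<in>{0<..<\<epsilon>}. \<gamma> t \<in> {x. a \<bullet> x = c}} \<subseteq> {t. poly (Pa idx a - [:c:]) t = 0}"
      by (auto simp: poly_Pa \<gamma>_def)
    then have "finite {t\<in>{0<..<\<epsilon>}. \<gamma> t \<in> {x. a \<bullet> x = c}}"
      using poly_roots_finite[OF pnz] by (rule finite_subset)
    then have "emeasure lborel {t\<in>{0<..<\<epsilon>}. \<gamma> t \<in> {x. a \<bullet> x = c}} = 0"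
      by (intro emeasure_lborel_countable countable_finite)
    moreover have "{x. a \<bullet> x = c} \<in> sets borel" by (intro borel_closed closed_hyperplane)
    ultimately show ?thesis using emM by simp
  qed
  have noeq: "\<not> orthogonal_equipartition M a b" for a b
  proof
    assume E: "orthogonal_equipartition M a b"
    have nz: "\<And>i. a i \<noteq> 0" and orth: "\<And>i j. i \<noteq> j \<Longrightarrow> a i \<bullet> a j = 0"
      and eqp: "\<And>s. emeasure M (\<Inter>i. open_halfspace (s i) (a i) (b i)) = emeasure M UNIV / 2 ^ CARD('n)"
      using E unfolding orthogonal_equipartition_def by auto
    define Z where "Z = (\<lambda>i. {t. 0 < t \<and> t < \<epsilon> \<and> a i \<bullet> gam idx t = b i})"
    have finZ: "finite (Z i)" for i
      unfolding Z_def by (rule key_bound(1)[OF bij nz orth eps0 eps1 epsK dl])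
    have sumZ: "(\<Sum>i\<in>UNIV. card (Z i)) \<le> (\<Sum>m<CARD('n). CARD('n) - m)"
      unfolding Z_def by (rule key_bound(2)[OF bij nz orth eps0 eps1 epsK dl])
    define ZZ where "ZZ = (\<Union>i. Z i)"
    have finZZ: "finite ZZ" using finZ by (simp add: ZZ_def)
    define f where "f = (\<lambda>i t. a i \<bullet> \<gamma> t - b i)"
    have contf: "continuous_on UNIV (f i)" for i
      unfolding f_def by (intro continuous_intros contg)
    have Zc: "t \<in> ZZ" if "0 < t" "t < \<epsilon>" "f i t = 0" for i t
      using that by (auto simp: ZZ_def Z_def f_def \<gamma>_def)
    have arcs: "card ((\<lambda>t. (\<lambda>i. f i t > 0)) ` ({0<..<\<epsilon>} - ZZ)) \<le> card ZZ + 1"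
      by (rule arcs_count[OF contf finZZ Zc])
    have cover: "s \<in> (\<lambda>t. (\<lambda>i. f i t > 0)) ` ({0<..<\<epsilon>} - ZZ)" for s
    proof -
      define Ors where "Ors = (\<Inter>i. open_halfspace (s i) (a i) (b i))"
      have "open Ors" unfolding Ors_def
        by (intro open_INT) (auto simp: open_halfspace_def open_halfspace_gt open_halfspace_lt)
      then have Ob: "Ors \<in> sets borel" by simp
      have "emeasure M Ors = ennreal \<epsilon> / 2 ^ CARD('n)" using eqp[of s] totM by (simp add: Ors_def)
      also have "\<dots> \<noteq> 0" using eps0 by (simp add: power_eq_top_ennreal)
      finally have "emeasure lborel {t\<in>{0<..<\<epsilon>}. \<gamma> t \<in> Ors} \<noteq> 0" using emM[OF Ob] by simp
      then have "{t\<in>{0<..<\<epsilon>}. \<gamma> t \<in> Ors} \<noteq> {}" by (metis emeasure_empty)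
      then obtain t where t: "t \<in> {0<..<\<epsilon>}" "\<gamma> t \<in> Ors" by blast
      have sgn: "(s i \<longrightarrow> f i t > 0) \<and> (\<not> s i \<longrightarrow> f i t < 0)" for i
      proof -
        have "\<gamma> t \<in> open_halfspace (s i) (a i) (b i)" using t(2) unfolding Ors_def by blast
        then show ?thesis by (cases "s i") (simp_all add: open_halfspace_def f_def)
      qed
      have "t \<notin> ZZ"
      proof
        assume "t \<in> ZZ"
        then obtain i where "t \<in> Z i" by (auto simp: ZZ_def)
        then have "f i t = 0" by (simp add: Z_def f_def \<gamma>_def)
        then show False using sgn[of i] by (cases "s i") auto
      qed
      moreover have "s = (\<lambda>i. f i t > 0)"
      proof (rule ext)
        fix i show "s i = (f i t > 0)" using sgn[of i] by (cases "s i") auto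
      qed
      ultimately show ?thesis using t(1) by blast
    qed
    then have "(UNIV :: ('n \<Rightarrow> bool) set) = (\<lambda>t. (\<lambda>i. f i t > 0)) ` ({0<..<\<epsilon>} - ZZ)" by blast
    moreover have "card (UNIV :: ('n \<Rightarrow> bool) set) = 2 ^ d"
      using card_fun[where 'a='n and 'b=bool] by (simp add: d_def)
    ultimately have "2 ^ d \<le> card ZZ + 1" using arcs by simp
    also have "card ZZ \<le> (\<Sum>i\<in>UNIV. card (Z i))" unfolding ZZ_def by (rule card_UN_le) simp
    also note sumZ
    finally have "2 ^ d \<le> (\<Sum>m<d. d - m) + 1" by (simp add: d_def)
    then show False using arith_final[OF d3] by simp
  qed
  show ?thesis
    by (intro exI[of _ M] conjI allI impI setsM finM hyp noeq)
qed

end
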